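(* Let $f:(0,1)\to(0,1)$ be of the form $f(p)=1-\sum_{k=1}^\infty c_k(1-p)^k$ with $c_k\ge 0$ and $\sum_{k=1}^\infty c_k=1$, and let $d_k$ be as defined below. Let $p\in(0,1)$ and let $X_1,X_2,\dots$ be i.i.d. Bernoulli random variables with parameter $p$. Then the output $Y$ of Algorithm 1 (described below) satisfies $\Pr[Y=1]=f(p)$.
   Context: Coefficients: $d_k = c_k/(1-\sum_{j=1}^{k-1}c_j)$ (if $c_K>0$ and $c_k=0$ for all $k>K$, then $d_K=1$ and $d_k$ for $k>K$ is not needed). Algorithm 1: let $U_1,U_2,\dots$ be i.i.d. uniform on $(0,1)$, independent of the $X_i$. Set $i=1$. (2) Take input $X_i$. (3) Let $V_i=1$ if $U_i<d_i$ and $V_i=0$ otherwise. (4) If $V_i=1$ or $X_i=1$, output $Y=X_i$ and stop; otherwise increase $i$ by $1$ and return to step (2). The number of inputs used, $N$, is the value of $i$ at stopping. *)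

theory Defs
  imports "HOL-Probability.Probability"
begin

text \<open>When the denominator vanishes (k > K in the finitely supported case) the value
  is irrelevant for the algorithm; by Isabelle's convention it is then 0.\<close>
definition dcoef :: "(nat \<Rightarrow> real) \<Rightarrow> nat \<Rightarrow> real" where
  "dcoef c k = c k / (1 - (\<Sum>j\<in>{1..<k}. c j))"

text \<open>Algorithm 1: step i (i >= 1) stops iff V_i = 1 (i.e. U_i < d_i) or X_i = 1.\<close>
definition alg_stop_at ::
  "(nat \<Rightarrow> real) \<Rightarrow> (nat \<Rightarrow> 'a \<Rightarrow> real) \<Rightarrow> (nat \<Rightarrow> 'a \<Rightarrow> real) \<Rightarrow> nat \<Rightarrow> 'a \<Rightarrow> bool" where
  "alg_stop_at d X U i \<omega> \<longleftrightarrow> (U i \<omega> < d i \<or> X i \<omega> = 1)"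

definition alg_stops ::
  "(nat \<Rightarrow> real) \<Rightarrow> (nat \<Rightarrow> 'a \<Rightarrow> real) \<Rightarrow> (nat \<Rightarrow> 'a \<Rightarrow> real) \<Rightarrow> 'a \<Rightarrow> bool" where
  "alg_stops d X U \<omega> \<longleftrightarrow> (\<exists>i\<ge>1. alg_stop_at d X U i \<omega>)"

definition alg_N ::
  "(nat \<Rightarrow> real) \<Rightarrow> (nat \<Rightarrow> 'a \<Rightarrow> real) \<Rightarrow> (nat \<Rightarrow> 'a \<Rightarrow> real) \<Rightarrow> 'a \<Rightarrow> nat" where
  "alg_N d X U \<omega> = (LEAST i. 1 \<le> i \<and> alg_stop_at d X U i \<omega>)"

text \<open>Output Y = X_N (meaningful when the algorithm stops).\<close>
definition alg_Y ::
  "(nat \<Rightarrow> real) \<Rightarrow> (nat \<Rightarrow> 'a \<Rightarrow> real) \<Rightarrow> (nat \<Rightarrow> 'a \<Rightarrow> real) \<Rightarrow> 'a \<Rightarrow> real" where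
  "alg_Y d X U \<omega> = X (alg_N d X U \<omega>) \<omega>"

end

theory Submission
  imports Defs
begin

lemma partial_le:
  fixes c :: "nat \<Rightarrow> real"
  assumes cn: "\<forall>k\<ge>1. c k \<ge> 0" and cs: "(\<lambda>k. c (Suc k)) sums 1"
  shows "(\<Sum>j\<in>{1..<n}. c j) \<le> 1" "0 \<le> (\<Sum>j\<in>{1..<n}. c j)"
proof -
  have e: "(\<Sum>j\<in>{1..<n}. c j) = (\<Sum>k<n-1. c (Suc k))"
  proof (cases n)
    case (Suc m) then show ?thesis
      using sum.shift_bounds_Suc_ivl[of c 0 m] by (simp add: atLeast0LessThan)
  qed simp
  have "(\<Sum>k<n-1. c (Suc k)) \<le> (\<Sum>k. c (Suc k))"
    by (rule sum_le_suminf) (use cs cn in \<open>auto simp: sums_iff\<close>)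
  then show "(\<Sum>j\<in>{1..<n}. c j) \<le> 1" using e cs by (simp add: sums_iff)
  show "0 \<le> (\<Sum>j\<in>{1..<n}. c j)" using cn by (intro sum_nonneg) auto
qed

lemma series_id:
  fixes c :: "nat \<Rightarrow> real" and p :: real
  assumes cn: "\<forall>k\<ge>1. c k \<ge> 0" and cs: "(\<lambda>k. c (Suc k)) sums 1"
    and p: "0 < p" "p < 1"
  defines "R \<equiv> \<lambda>n. 1 - (\<Sum>j\<in>{1..<n}. c j)"
  shows "(\<lambda>n. R (Suc n) * (1-p)^n * p) sums (1 - (\<Sum>k. c (Suc k) * (1 - p) ^ Suc k))"
proof -
  define q where "q = 1 - p"
  have q: "0 < q" "q < 1" using p by (auto simp: q_def)
  have RS: "R (Suc (Suc N)) = R (Suc N) - c (Suc N)" for N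
    by (simp add: R_def)
  have part: "(\<Sum>n<N. R (Suc n) * q^n * p) = 1 - (\<Sum>k<N. c (Suc k) * q ^ Suc k) - R (Suc N) * q^N" for N
  proof (induction N)
    case 0 then show ?case by (simp add: R_def)
  next
    case (Suc N)
    have pq: "p = 1 - q" by (simp add: q_def)
    define B where "B = (\<Sum>k<N. c (Suc k) * q ^ Suc k)"
    have "(\<Sum>n<Suc N. R (Suc n) * q^n * p) = 1 - B - R (Suc N) * q^N + R (Suc N) * q^N * (1 - q)"
      unfolding sum.lessThan_Suc Suc.IH B_def by (simp add: q_def)
    also have "\<dots> = 1 - (B + c (Suc N) * q ^ Suc N) - R (Suc (Suc N)) * q ^ Suc N"
      unfolding RS by (simp add: algebra_simps)
    finally show ?case by (simp add: B_def)
  qed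
  have Rb: "0 \<le> R n" "R n \<le> 1" for n using partial_le[OF cn cs, of n] by (auto simp: R_def)
  have summ: "summable (\<lambda>k. c (Suc k) * q ^ Suc k)"
  proof (rule summable_comparison_test[of _ "\<lambda>k. c (Suc k)"])
    show "\<exists>N. \<forall>n\<ge>N. norm (c (Suc n) * q ^ Suc n) \<le> c (Suc n)"
      using cn q by (auto intro!: exI[of _ 0] mult_left_le simp: abs_mult power_le_one simp del: power_Suc)
    show "summable (\<lambda>k. c (Suc k))" using cs by (simp add: sums_iff)
  qed
  have t0: "(\<lambda>N. R (Suc N) * q^N) \<longlonglongrightarrow> 0"
  proof (rule Lim_null_comparison[of _ "\<lambda>N. q^N"])
    show "\<forall>\<^sub>F N in sequentially. norm (R (Suc N) * q ^ N) \<le> q ^ N"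
      using Rb q by (auto simp: abs_mult intro!: always_eventually mult_left_le_one_le)
    show "(\<lambda>N. q^N) \<longlonglongrightarrow> 0" using q by (intro LIMSEQ_power_zero) auto
  qed
  have "(\<lambda>N. 1 - (\<Sum>k<N. c (Suc k) * q ^ Suc k) - R (Suc N) * q^N) \<longlonglongrightarrow> 1 - (\<Sum>k. c (Suc k) * q ^ Suc k) - 0"
    by (intro tendsto_intros summable_LIMSEQ summ t0)
  then have "(\<lambda>N. (\<Sum>n<N. R (Suc n) * q^n * p)) \<longlonglongrightarrow> 1 - (\<Sum>k. c (Suc k) * q ^ Suc k)"
    unfolding part by simp
  then show ?thesis unfolding sums_def q_def .
qed

lemma dcoef_props:
  fixes c :: "nat \<Rightarrow> real"
  assumes cn: "\<forall>k\<ge>1. c k \<ge> 0" and cs: "(\<lambda>k. c (Suc k)) sums 1" and i: "i \<ge> 1"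
  shows "0 \<le> dcoef c i" "dcoef c i \<le> 1"
    "1 - (\<Sum>j\<in>{1..<Suc i}. c j) = (1 - (\<Sum>j\<in>{1..<i}. c j)) * (1 - dcoef c i)"
proof -
  define R where "R = 1 - (\<Sum>j\<in>{1..<i}. c j)"
  have RS: "1 - (\<Sum>j\<in>{1..<Suc i}. c j) = R - c i" using i by (simp add: R_def)
  have "0 \<le> 1 - (\<Sum>j\<in>{1..<Suc i}. c j)" using partial_le(1)[OF cn cs, of "Suc i"] by simp
  then have ci: "c i \<le> R" using RS by simp
  have c0: "0 \<le> c i" using cn i by auto
  have dR: "dcoef c i = c i / R" unfolding dcoef_def R_def ..
  show "0 \<le> dcoef c i" using ci c0 by (simp add: dR)
  show "dcoef c i \<le> 1" using ci c0 by (cases "R = 0") (auto simp: dR divide_le_eq_1)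
  show "1 - (\<Sum>j\<in>{1..<Suc i}. c j) = (1 - (\<Sum>j\<in>{1..<i}. c j)) * (1 - dcoef c i)"
  proof -
    have key: "R - c i = R * (1 - dcoef c i)"
    proof (cases "R = 0")
      case True then have "c i = 0" using ci c0 by simp
      then show ?thesis using True by simp
    next
      case False then show ?thesis by (simp add: dR field_simps)
    qed
    show ?thesis using key unfolding RS R_def .
  qed
qed

lemma dcoef_prod:
  fixes c :: "nat \<Rightarrow> real"
  assumes cn: "\<forall>k\<ge>1. c k \<ge> 0" and cs: "(\<lambda>k. c (Suc k)) sums 1"
  shows "(\<Prod>i\<in>{1..<n}. 1 - dcoef c i) = 1 - (\<Sum>j\<in>{1..<n}. c j)"
proof (induction n)
  case 0 then show ?case by simp
next
  case (Suc n)
  show ?case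
  proof (cases "n = 0")
    case True then show ?thesis by simp
  next
    case False
    then have "(\<Prod>i\<in>{1..<Suc n}. 1 - dcoef c i) = (\<Prod>i\<in>{1..<n}. 1 - dcoef c i) * (1 - dcoef c n)"
      by (simp add: prod.atLeastLessThan_Suc)
    then show ?thesis using Suc.IH dcoef_props(3)[OF cn cs, of n] False by simp
  qed
qed

theorem theorem1:
  fixes M :: "'a measure"
    and c :: "nat \<Rightarrow> real" and f :: "real \<Rightarrow> real" and p :: real
    and X U :: "nat \<Rightarrow> 'a \<Rightarrow> real"
  assumes c_nonneg: "\<forall>k\<ge>1. c k \<ge> 0"
    and c_sum: "(\<lambda>k. c (Suc k)) sums 1"
    and f_range: "\<forall>q\<in>{0<..<1}. f q \<in> {0<..<1}"
    and f_def: "\<forall>q\<in>{0<..<1}. f q = 1 - (\<Sum>k. c (Suc k) * (1 - q) ^ Suc k)"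
    and p: "0 < p" "p < 1"
    and M: "prob_space M"
    and indep: "prob_space.indep_vars M (\<lambda>_. borel)
                  (\<lambda>i. case i of Inl n \<Rightarrow> X n | Inr n \<Rightarrow> U n)
                  (Inl ` {1..} \<union> Inr ` {1..})"
    and X_bern: "\<forall>i\<ge>1. (\<forall>\<omega>\<in>space M. X i \<omega> \<in> {0, 1}) \<and>
                        measure M {\<omega>\<in>space M. X i \<omega> = 1} = p"
    and U_unif: "\<forall>i\<ge>1. distr M lborel (U i) = uniform_measure lborel {0<..<1}"
  shows "measure M {\<omega>\<in>space M. alg_stops (dcoef c) X U \<omega> \<and> alg_Y (dcoef c) X U \<omega> = 1} = f p"
proof -
  interpret prob_space M by (rule M)
  define d where "d = dcoef c"
  define Z where "Z = (\<lambda>i. case i of Inl n \<Rightarrow> X n | Inr n \<Rightarrow> U n)"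
  define I :: "(nat + nat) set" where "I = Inl ` {1..} \<union> Inr ` {1..}"
  define F where "F = (\<lambda>i. {Z i -` A \<inter> space M | A. A \<in> sets (borel :: real measure)})"
  have rv: "\<forall>i\<in>I. random_variable borel (Z i)" and ind: "indep_sets F I"
    using indep unfolding indep_vars_def2 Z_def I_def F_def by auto
  have Xm: "X i \<in> borel_measurable M" if "i \<ge> 1" for i
    using rv[rule_format, of "Inl i"] that by (auto simp: Z_def I_def)
  have Um: "U i \<in> borel_measurable M" if "i \<ge> 1" for i
    using rv[rule_format, of "Inr i"] that by (auto simp: Z_def I_def)
  define J where "J = (\<lambda>n. Inl ` {1..n} \<union> Inr ` {1..<n} :: (nat + nat) set)"
  define Bs where "Bs = (\<lambda>n j. case j of Inl i \<Rightarrow> X i -` (if i = n then {1} else -{1}) \<inter> space M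
                                     | Inr i \<Rightarrow> U i -` {d i..} \<inter> space M)"
  define A where "A = (\<lambda>n. \<Inter>j\<in>J n. Bs n j)"
  have dp: "0 \<le> d i" "d i \<le> 1" if "i \<ge> 1" for i
    using dcoef_props[OF c_nonneg c_sum that] by (auto simp: d_def)
  have pX1: "prob (X i -` {1} \<inter> space M) = p" if "i \<ge> 1" for i
  proof -
    have "X i -` {1} \<inter> space M = {\<omega>\<in>space M. X i \<omega> = 1}" by auto
    then show ?thesis using X_bern that by simp
  qed
  have pX0: "prob (X i -` (-{1}) \<inter> space M) = 1 - p" if "i \<ge> 1" for i
  proof -
    have "X i -` (-{1}) \<inter> space M = space M - (X i -` {1} \<inter> space M)" by auto
    moreover have "X i -` {1} \<inter> space M \<in> events" using Xm[OF that] by measurable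
    ultimately show ?thesis using pX1[OF that] prob_compl by simp
  qed
  have pU: "prob (U i -` {d i..} \<inter> space M) = 1 - d i" if "i \<ge> 1" for i
  proof -
    have ev: "U i -` {..<d i} \<inter> space M \<in> events" using Um[OF that] by measurable
    have "prob (U i -` {..<d i} \<inter> space M) = measure (distr M lborel (U i)) {..<d i}"
      using Um[OF that] by (simp add: measure_distr)
    also have "\<dots> = measure (uniform_measure lborel {0<..<1}) {..<d i}"
      using U_unif that by simp
    also have "\<dots> = measure lborel ({0<..<1} \<inter> {..<d i}) / measure lborel {0<..<(1::real)}"
      by (rule measure_uniform_measure) auto
    also have "{0<..<1} \<inter> {..<d i} = {0<..<d i}" using dp[OF that] by auto
    also have "measure lborel {0<..<d i} / measure lborel {0<..<(1::real)} = d i"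
      using dp[OF that] by simp
    finally have pl: "prob (U i -` {..<d i} \<inter> space M) = d i" .
    have "U i -` {d i..} \<inter> space M = space M - (U i -` {..<d i} \<inter> space M)" by auto
    then show ?thesis using pl ev prob_compl by simp
  qed
  have pA: "prob (A n) = (1 - p) ^ (n - 1) * p * (1 - (\<Sum>j\<in>{1..<n}. c j))" if n: "n \<ge> 1" for n
  proof -
    have JI: "J n \<subseteq> I" using n by (auto simp: J_def I_def)
    have Jne: "J n \<noteq> {}" using n by (auto simp: J_def)
    have Jf: "finite (J n)" by (simp add: J_def)
    have BF: "Bs n \<in> Pi (J n) F"
    proof
      fix j assume "j \<in> J n"
      then show "Bs n j \<in> F j"
      proof (cases j)
        case (Inl i) then show ?thesis unfolding Bs_def F_def Z_def
          by (intro CollectI exI[of _ "if i = n then {1} else -{1}"]) auto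
      next
        case (Inr i) then show ?thesis unfolding Bs_def F_def Z_def
          by (intro CollectI exI[of _ "{d i..}"]) auto
      qed
    qed
    have "prob (A n) = (\<Prod>j\<in>J n. prob (Bs n j))"
      using ind JI Jne Jf BF unfolding indep_sets_def A_def by blast
    also have "\<dots> = (\<Prod>j\<in>Inl ` {1..n}. prob (Bs n j)) * (\<Prod>j\<in>Inr ` {1..<n}. prob (Bs n j))"
      unfolding J_def by (rule prod.union_disjoint) auto
    also have "(\<Prod>j\<in>Inl ` {1..n}. prob (Bs n j)) = (\<Prod>i\<in>{1..n}. prob (Bs n (Inl i)))"
      by (simp add: prod.reindex)
    also have "\<dots> = (\<Prod>i\<in>insert n {1..<n}. prob (Bs n (Inl i)))"
      using n by (intro prod.cong) auto
    also have "\<dots> = p * (\<Prod>i\<in>{1..<n}. prob (Bs n (Inl i)))"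
      using n pX1[OF n] by (simp add: Bs_def)
    also have "(\<Prod>i\<in>{1..<n}. prob (Bs n (Inl i))) = (\<Prod>i\<in>{1..<n}. 1 - p)"
      using pX0 by (intro prod.cong) (auto simp: Bs_def)
    also have "(\<Prod>j\<in>Inr ` {1..<n}. prob (Bs n j)) = (\<Prod>i\<in>{1..<n}. prob (Bs n (Inr i)))"
      by (simp add: prod.reindex)
    also have "\<dots> = (\<Prod>i\<in>{1..<n}. 1 - d i)"
      using pU by (intro prod.cong) (auto simp: Bs_def)
    also have "\<dots> = 1 - (\<Sum>j\<in>{1..<n}. c j)"
      unfolding d_def by (rule dcoef_prod[OF c_nonneg c_sum])
    finally show ?thesis by simp
  qed
  have memA: "\<omega> \<in> A n \<longleftrightarrow> \<omega> \<in> space M \<and> X n \<omega> = 1 \<and> (\<forall>i. 1 \<le> i \<and> i < n \<longrightarrow> \<not> alg_stop_at d X U i \<omega>)"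
    if n: "n \<ge> 1" for n \<omega>
  proof -
    have e1: "\<omega> \<in> A n \<longleftrightarrow> (\<forall>i\<in>{1..n}. \<omega> \<in> Bs n (Inl i)) \<and> (\<forall>i\<in>{1..<n}. \<omega> \<in> Bs n (Inr i))"
      unfolding A_def J_def by blast
    have e2: "(\<forall>i\<in>{1..n}. \<omega> \<in> Bs n (Inl i)) \<longleftrightarrow> \<omega> \<in> space M \<and> X n \<omega> = 1 \<and> (\<forall>i. 1 \<le> i \<and> i < n \<longrightarrow> X i \<omega> \<noteq> 1)"
      using n unfolding Bs_def by (auto simp: less_le)
    have e3: "(\<forall>i\<in>{1..<n}. \<omega> \<in> Bs n (Inr i)) \<longleftrightarrow> (\<forall>i. 1 \<le> i \<and> i < n \<longrightarrow> \<omega> \<in> space M \<and> d i \<le> U i \<omega>)"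
      unfolding Bs_def by auto
    show ?thesis unfolding e1 e2 e3 alg_stop_at_def by (auto simp: not_less)
  qed
  have set_eq: "{\<omega>\<in>space M. alg_stops (dcoef c) X U \<omega> \<and> alg_Y (dcoef c) X U \<omega> = 1} = (\<Union>n. A (Suc n))"
  proof (intro equalityI subsetI)
    fix \<omega> assume "\<omega> \<in> {\<omega>\<in>space M. alg_stops (dcoef c) X U \<omega> \<and> alg_Y (dcoef c) X U \<omega> = 1}"
    then have sp: "\<omega> \<in> space M" and st: "\<exists>i\<ge>1. alg_stop_at d X U i \<omega>" and Y: "X (alg_N d X U \<omega>) \<omega> = 1"
      by (auto simp: alg_stops_def alg_Y_def d_def)
    define N where "N = alg_N d X U \<omega>"
    have N: "1 \<le> N \<and> alg_stop_at d X U N \<omega>"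
      unfolding N_def alg_N_def using st by (metis (mono_tags, lifting) LeastI)
    have lt: "\<not> alg_stop_at d X U i \<omega>" if "1 \<le> i" "i < N" for i
      using not_less_Least[of i "\<lambda>i. 1 \<le> i \<and> alg_stop_at d X U i \<omega>"] that
      unfolding N_def alg_N_def by blast
    have "\<omega> \<in> A N" using memA[of N \<omega>] N lt sp Y by (auto simp: N_def)
    moreover have "N = Suc (N - 1)" using N by simp
    ultimately show "\<omega> \<in> (\<Union>n. A (Suc n))" by (metis UNIV_I UN_I)
  next
    fix \<omega> assume "\<omega> \<in> (\<Union>n. A (Suc n))"
    then obtain n where "\<omega> \<in> A (Suc n)" by blast
    then have sp: "\<omega> \<in> space M" and X1: "X (Suc n) \<omega> = 1"
      and lt: "\<And>i. 1 \<le> i \<Longrightarrow> i < Suc n \<Longrightarrow> \<not> alg_stop_at d X U i \<omega>"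
      using memA[of "Suc n" \<omega>] by auto
    have stn: "alg_stop_at d X U (Suc n) \<omega>" using X1 by (simp add: alg_stop_at_def)
    have "alg_N d X U \<omega> = Suc n"
      unfolding alg_N_def
    proof (rule Least_equality)
      show "1 \<le> Suc n \<and> alg_stop_at d X U (Suc n) \<omega>" using stn by simp
      fix y assume "1 \<le> y \<and> alg_stop_at d X U y \<omega>"
      then show "Suc n \<le> y" using lt by (meson not_le)
    qed
    then show "\<omega> \<in> {\<omega>\<in>space M. alg_stops (dcoef c) X U \<omega> \<and> alg_Y (dcoef c) X U \<omega> = 1}"
      using sp X1 stn by (auto simp: alg_stops_def alg_Y_def d_def[symmetric] intro!: exI[of _ "Suc n"])
  qed
  have Aev: "A (Suc n) \<in> events" for n
    unfolding A_def J_def Bs_def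
    by (intro sets.finite_INT) (auto intro!: measurable_sets[OF Xm] measurable_sets[OF Um] split: sum.split)
  have disj: "disjoint_family (\<lambda>n. A (Suc n))"
  proof (unfold disjoint_family_on_def, intro ballI impI)
    fix m n :: nat assume "m \<noteq> n"
    { fix a b :: nat assume ab: "a < b"
      have "A (Suc a) \<inter> A (Suc b) = {}"
      proof (rule ccontr)
        assume "A (Suc a) \<inter> A (Suc b) \<noteq> {}"
        then obtain \<omega> where "\<omega> \<in> A (Suc a)" "\<omega> \<in> A (Suc b)" by blast
        then have "X (Suc a) \<omega> = 1" "\<not> alg_stop_at d X U (Suc a) \<omega>"
          using memA[of "Suc a" \<omega>] memA[of "Suc b" \<omega>] ab by auto
        then show False by (simp add: alg_stop_at_def)
      qed }
    then show "A (Suc m) \<inter> A (Suc n) = {}" using \<open>m \<noteq> n\<close>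
      by (metis Int_commute linorder_neqE_nat)
  qed
  have S1: "(\<lambda>n. prob (A (Suc n))) sums prob (\<Union>n. A (Suc n))"
    by (rule finite_measure_UNION) (use Aev disj in auto)
  have S2: "(\<lambda>n. prob (A (Suc n))) sums (1 - (\<Sum>k. c (Suc k) * (1 - p) ^ Suc k))"
  proof -
    have "prob (A (Suc n)) = (1 - (\<Sum>j\<in>{1..<Suc n}. c j)) * (1-p)^n * p" for n
      using pA[of "Suc n"] by simp
    then show ?thesis using series_id[OF c_nonneg c_sum p] by simp
  qed
  have "prob (\<Union>n. A (Suc n)) = 1 - (\<Sum>k. c (Suc k) * (1 - p) ^ Suc k)"
    using S1 S2 sums_unique2 by blast
  then show ?thesis using set_eq f_def p by simp
qed

end
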